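(* Let $r$ and $k$ be positive integers and $x\ge1$, $y$ real. Define $$R(r,k,x)=\sum_{\substack{y<r<q_1<\cdots<q_k\le x\\ r\mid q_1-1,\ q_1\mid q_2-1,\ \dots,\ q_{k-1}\mid q_k-1}}\frac{1}{q_k},$$ where $q_1,\dots,q_k$ range over primes. Then $R(r,k,x)\le\frac{(\log x+1)^k}{r}$. Consequently, $$S(r,k,x):=\sum_{\substack{y<r<q_1<\cdots<q_k\le n\le x\\ r\mid q_1-1,\ q_1\mid q_2-1,\ \dots,\ q_{k-1}\mid q_k-1,\ q_k\mid n}}1\ \le\ \frac{x(\log x+1)^k}{r},$$ where $q_1,\dots,q_k$ range over primes and $n$ over positive integers. *)

theory Defs
  imports Complex_Main "HOL-Computational_Algebra.Primes"
begin

text \<open>Prime chains y < r < q_1 < ... < q_k <= x with r | q_1 - 1 and q_i | q_(i+1) - 1,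
  represented as lists qs = [q_1, ..., q_k] of primes.\<close>
definition prime_chains :: "real \<Rightarrow> nat \<Rightarrow> nat \<Rightarrow> real \<Rightarrow> nat list set" where
  "prime_chains y r k x =
     {qs. length qs = k \<and> y < real r \<and> (\<forall>q\<in>set qs. prime q \<and> real q \<le> x)
          \<and> sorted_wrt (<) (r # qs)
          \<and> (\<forall>i<k. (r # qs) ! i dvd qs ! i - 1)}"

definition R_sum :: "real \<Rightarrow> nat \<Rightarrow> nat \<Rightarrow> real \<Rightarrow> real" where
  "R_sum y r k x = (\<Sum>qs\<in>prime_chains y r k x. 1 / real (last qs))"

definition S_count :: "real \<Rightarrow> nat \<Rightarrow> nat \<Rightarrow> real \<Rightarrow> nat" where
  "S_count y r k x = card {(qs, n). qs \<in> prime_chains y r k x \<and> n \<ge> 1 \<and> last qs \<le> n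
                                     \<and> real n \<le> x \<and> last qs dvd n}"

end

theory Submission
  imports Defs "HOL-Analysis.Analysis"
begin

definition QQ :: "nat \<Rightarrow> real \<Rightarrow> nat set" where
  "QQ r x = {q. prime q \<and> real q \<le> x \<and> r < q \<and> r dvd q - 1}"

lemma nat_le_floor: "real q \<le> x \<Longrightarrow> q \<le> nat \<lfloor>x\<rfloor>"
  by (meson le_nat_floor)

lemma finite_QQ: "finite (QQ r x)"
  by (rule finite_subset[of _ "{..nat \<lfloor>x\<rfloor>}"]) (auto simp: QQ_def nat_le_floor)

lemma finite_chains: "finite (prime_chains y r k x)"
proof (rule finite_subset[of _ "{xs. set xs \<subseteq> {..nat \<lfloor>x\<rfloor>} \<and> length xs = k}"])
  show "prime_chains y r k x \<subseteq> {xs. set xs \<subseteq> {..nat \<lfloor>x\<rfloor>} \<and> length xs = k}"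
    by (auto simp: prime_chains_def nat_le_floor)
  show "finite {xs. set xs \<subseteq> {..nat \<lfloor>x\<rfloor>} \<and> length xs = k}"
    by (rule finite_lists_length_eq) simp
qed

lemma harm_bound:
  assumes "x \<ge> 1"
  shows "(\<Sum>m=1..nat \<lfloor>x\<rfloor>. 1 / real m) \<le> ln x + 1"
proof -
  define n where "n = nat \<lfloor>x\<rfloor>"
  have n1: "n \<ge> 1" using assms by (simp add: n_def le_nat_floor)
  have nx: "real n \<le> x" using assms by (simp add: n_def)
  have "harm n - ln (real n) \<le> harm 1 - ln (real (1::nat))"
    using euler_mascheroni_sequence_decreasing[of 1 n] n1 by simp
  hence "harm n \<le> ln (real n) + (1::real)" by (simp add: harm_def)
  also have "ln (real n) \<le> ln x" using n1 nx by simp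
  finally have "harm n \<le> ln x + (1::real)" by simp
  thus ?thesis by (simp add: harm_def n_def divide_inverse)
qed

lemma QQ_bound:
  assumes r: "r > 0" and x: "x \<ge> 1"
  shows "(\<Sum>q\<in>QQ r x. 1 / real q) \<le> (ln x + 1) / real r"
proof -
  define g where "g q = (q - 1) div r" for q
  have eq: "q = r * g q + 1" if "q \<in> QQ r x" for q
    using that by (auto simp: QQ_def g_def)
  have inj: "inj_on g (QQ r x)"
    by (rule inj_onI) (metis eq)
  have g1: "g q \<ge> 1" if "q \<in> QQ r x" for q
  proof (rule ccontr)
    assume "\<not> g q \<ge> 1"
    hence "g q = 0" by simp
    with eq[OF that] have "q = 1" by simp
    with that r show False by (auto simp: QQ_def)
  qed
  have img: "g ` QQ r x \<subseteq> {1..nat \<lfloor>x\<rfloor>}"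
  proof
    fix m assume "m \<in> g ` QQ r x"
    then obtain q where q: "q \<in> QQ r x" "m = g q" by auto
    have "m \<le> r * m" using r by simp
    also have "\<dots> < q" using eq[OF q(1)] q(2) by simp
    finally have "m \<le> q" by simp
    moreover have "real q \<le> x" using q by (simp add: QQ_def)
    ultimately have "real m \<le> x" by linarith
    thus "m \<in> {1..nat \<lfloor>x\<rfloor>}" using g1[OF q(1)] q(2) by (simp add: nat_le_floor)
  qed
  have "(\<Sum>q\<in>QQ r x. 1 / real q) \<le> (\<Sum>q\<in>QQ r x. (1 / real r) * (1 / real (g q)))"
  proof (rule sum_mono)
    fix q assume q: "q \<in> QQ r x"
    have "real r * real (g q) \<le> real q"
      using eq[OF q] by (metis of_nat_mult of_nat_le_iff le_add1)
    moreover have "real r * real (g q) > 0" using r g1[OF q] by simp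
    ultimately show "1 / real q \<le> (1 / real r) * (1 / real (g q))"
      by (simp add: frac_le)
  qed
  also have "\<dots> = (1 / real r) * (\<Sum>m\<in>g ` QQ r x. 1 / real m)"
    by (simp add: sum_distrib_left sum.reindex[OF inj])
  also have "\<dots> \<le> (1 / real r) * (\<Sum>m=1..nat \<lfloor>x\<rfloor>. 1 / real m)"
    by (intro mult_left_mono sum_mono2 img) auto
  also have "\<dots> \<le> (1 / real r) * (ln x + 1)"
    by (intro mult_left_mono harm_bound x) auto
  finally show ?thesis by simp
qed

lemma chains_sub:
  "prime_chains y r (Suc j) x \<subseteq>
     (\<lambda>(q, t). q # t) ` (SIGMA q:QQ r x. prime_chains y q j x)"
proof
  fix qs assume qs: "qs \<in> prime_chains y r (Suc j) x"
  then obtain q t where qt: "qs = q # t" by (cases qs) (auto simp: prime_chains_def)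
  have A: "length t = j" "y < real r" "prime q" "real q \<le> x" "\<forall>p\<in>set t. prime p \<and> real p \<le> x"
    "r < q" "sorted_wrt (<) (q # t)" "\<forall>i<Suc j. (r # q # t) ! i dvd (q # t) ! i - 1"
    using qs qt by (auto simp: prime_chains_def)
  have "r dvd q - 1" using A(8)[rule_format, of 0] by simp
  hence "q \<in> QQ r x" using A by (simp add: QQ_def)
  moreover have "\<forall>i<j. (q # t) ! i dvd t ! i - 1"
    using A(8) by (metis Suc_mono nth_Cons_Suc)
  hence "t \<in> prime_chains y q j x" using A by (auto simp: prime_chains_def)
  ultimately show "qs \<in> (\<lambda>(q, t). q # t) ` (SIGMA q:QQ r x. prime_chains y q j x)"
    using qt by force
qed

lemma chains_sum:
  assumes "\<And>qs. f qs \<ge> (0::real)"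
  shows "(\<Sum>qs\<in>prime_chains y r (Suc j) x. f qs)
     \<le> (\<Sum>q\<in>QQ r x. \<Sum>t\<in>prime_chains y q j x. f (q # t))"
proof -
  let ?S = "SIGMA q:QQ r x. prime_chains y q j x"
  have fin: "finite ?S" by (simp add: finite_QQ finite_chains)
  have inj: "inj_on (\<lambda>(q, t). q # t) ?S" by (auto simp: inj_on_def)
  have "(\<Sum>qs\<in>prime_chains y r (Suc j) x. f qs) \<le> (\<Sum>qs\<in>(\<lambda>(q, t). q # t) ` ?S. f qs)"
    by (intro sum_mono2 chains_sub assms finite_imageI fin)
  also have "\<dots> = (\<Sum>p\<in>?S. f (fst p # snd p))"
    by (subst sum.reindex[OF inj]) (simp add: case_prod_beta)
  also have "\<dots> = (\<Sum>q\<in>QQ r x. \<Sum>t\<in>prime_chains y q j x. f (q # t))"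
    using sum.Sigma[of "QQ r x" "\<lambda>q. prime_chains y q j x" "\<lambda>q t. f (q # t)"]
    by (simp add: finite_QQ finite_chains case_prod_beta)
  finally show ?thesis .
qed

lemma R_bound:
  assumes x: "x \<ge> 1"
  shows "r > 0 \<Longrightarrow> R_sum y r (Suc j) x \<le> (ln x + 1) ^ Suc j / real r"
proof (induction j arbitrary: r)
  case 0
  have c0: "prime_chains y q 0 x \<subseteq> {[]}" for q by (auto simp: prime_chains_def)
  have "R_sum y r (Suc 0) x \<le> (\<Sum>q\<in>QQ r x. \<Sum>t\<in>prime_chains y q 0 x. 1 / real (last (q # t)))"
    unfolding R_sum_def by (rule chains_sum) simp
  also have "\<dots> \<le> (\<Sum>q\<in>QQ r x. 1 / real q)"
  proof (rule sum_mono)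
    fix q
    have "(\<Sum>t\<in>prime_chains y q 0 x. 1 / real (last (q # t))) \<le> (\<Sum>t\<in>{[]}. 1 / real (last (q # t)))"
      by (intro sum_mono2 c0) auto
    thus "(\<Sum>t\<in>prime_chains y q 0 x. 1 / real (last (q # t))) \<le> 1 / real q" by simp
  qed
  also have "\<dots> \<le> (ln x + 1) / real r" by (rule QQ_bound[OF 0 x])
  finally show ?case by simp
next
  case (Suc j)
  have "R_sum y r (Suc (Suc j)) x \<le> (\<Sum>q\<in>QQ r x. \<Sum>t\<in>prime_chains y q (Suc j) x. 1 / real (last (q # t)))"
    unfolding R_sum_def by (rule chains_sum) simp
  also have "\<dots> = (\<Sum>q\<in>QQ r x. R_sum y q (Suc j) x)"
  proof (rule sum.cong[OF refl])
    fix q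
    have "t \<noteq> []" if "t \<in> prime_chains y q (Suc j) x" for t
      using that by (auto simp: prime_chains_def)
    thus "(\<Sum>t\<in>prime_chains y q (Suc j) x. 1 / real (last (q # t))) = R_sum y q (Suc j) x"
      unfolding R_sum_def by (intro sum.cong) auto
  qed
  also have "\<dots> \<le> (\<Sum>q\<in>QQ r x. (ln x + 1) ^ Suc j * (1 / real q))"
  proof (rule sum_mono)
    fix q assume "q \<in> QQ r x"
    hence "q > 0" using Suc.prems by (auto simp: QQ_def)
    thus "R_sum y q (Suc j) x \<le> (ln x + 1) ^ Suc j * (1 / real q)"
      using Suc.IH[of q] by simp
  qed
  also have "\<dots> = (ln x + 1) ^ Suc j * (\<Sum>q\<in>QQ r x. 1 / real q)"
    by (simp add: sum_distrib_left)
  also have "\<dots> \<le> (ln x + 1) ^ Suc j * ((ln x + 1) / real r)"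
    using x by (intro mult_left_mono QQ_bound Suc.prems) auto
  finally show ?case by (simp add: mult_ac)
qed

lemma count_bound:
  assumes "p > 0" "x \<ge> 1"
  shows "real (card {n. n \<ge> 1 \<and> p \<le> n \<and> real n \<le> x \<and> p dvd n}) \<le> x / real p"
proof -
  let ?N = "{n. n \<ge> 1 \<and> p \<le> n \<and> real n \<le> x \<and> p dvd n}"
  have "?N \<subseteq> (\<lambda>j. p * j) ` {1..nat \<lfloor>x / real p\<rfloor>}"
  proof
    fix n assume n: "n \<in> ?N"
    then obtain j where j: "n = p * j" by auto
    have "j \<ge> 1" using n j by (cases j) auto
    moreover have "real p * real j \<le> x" using n j by simp
    hence "real j \<le> x / real p" using assms by (simp add: field_simps)
    ultimately show "n \<in> (\<lambda>j. p * j) ` {1..nat \<lfloor>x / real p\<rfloor>}"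
      using j by (auto simp: nat_le_floor)
  qed
  hence "card ?N \<le> card ((\<lambda>j. p * j) ` {1..nat \<lfloor>x / real p\<rfloor>})"
    by (intro card_mono finite_imageI) auto
  also have "\<dots> \<le> card {1..nat \<lfloor>x / real p\<rfloor>}" by (rule card_image_le) simp
  also have "\<dots> = nat \<lfloor>x / real p\<rfloor>" by simp
  finally have "real (card ?N) \<le> real (nat \<lfloor>x / real p\<rfloor>)" by simp
  also have "\<dots> \<le> x / real p" using assms by simp
  finally show ?thesis .
qed

theorem lemma4p2:
  fixes r k :: nat and x y :: real
  assumes "r > 0" and "k > 0" and "x \<ge> 1"
  shows "R_sum y r k x \<le> (ln x + 1) ^ k / real r
         \<and> real (S_count y r k x) \<le> x * (ln x + 1) ^ k / real r"
proof -
  obtain j where kj: "k = Suc j" using assms(2) by (cases k) auto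
  have R: "R_sum y r k x \<le> (ln x + 1) ^ k / real r"
    using R_bound[OF assms(3) assms(1)] kj by simp
  define N where "N qs = {n. n \<ge> 1 \<and> last qs \<le> n \<and> real n \<le> x \<and> last qs dvd n}" for qs
  have eqS: "{(qs, n). qs \<in> prime_chains y r k x \<and> n \<ge> 1 \<and> last qs \<le> n
                                     \<and> real n \<le> x \<and> last qs dvd n} = (SIGMA qs:prime_chains y r k x. N qs)"
    by (auto simp: N_def)
  have finN: "finite (N qs)" for qs
    by (rule finite_subset[of _ "{..nat \<lfloor>x\<rfloor>}"]) (auto simp: N_def nat_le_floor)
  have "real (S_count y r k x) = (\<Sum>qs\<in>prime_chains y r k x. real (card (N qs)))"
    unfolding S_count_def eqS by (simp add: finite_chains finN)
  also have "\<dots> \<le> (\<Sum>qs\<in>prime_chains y r k x. x * (1 / real (last qs)))"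
  proof (rule sum_mono)
    fix qs assume qs: "qs \<in> prime_chains y r k x"
    hence "qs \<noteq> []" "\<forall>q\<in>set qs. prime q" using kj by (auto simp: prime_chains_def)
    hence "prime (last qs)" by simp
    hence "last qs > 0" using prime_gt_0_nat by blast
    thus "real (card (N qs)) \<le> x * (1 / real (last qs))"
      using count_bound[of "last qs" x] assms(3) by (simp add: N_def)
  qed
  also have "\<dots> = x * R_sum y r k x" by (simp add: R_sum_def sum_distrib_left)
  also have "\<dots> \<le> x * ((ln x + 1) ^ k / real r)"
    using R assms(3) by (intro mult_left_mono) auto
  finally show ?thesis using R by simp
qed

end
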